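(* Let $T$ be a tree of order $n$ and diameter $d$ with maximum Wiener index, and let $x$ be a leaf of $T$. Then ${\rm ecc}(x)=d$.
   Context: All graphs are finite and simple. The Wiener index of a connected graph $G$ is $W(G)=\sum_{\{u,v\}\subseteq V(G)} d(u,v)$. A tree $T$ of order $n$ and diameter $d$ has maximum Wiener index if $W(T')\leq W(T)$ for every tree $T'$ of order $n$ and diameter $d$. A leaf is a vertex of degree $1$. The eccentricity ${\rm ecc}(v)$ of a vertex $v$ is the maximum distance from $v$ to a vertex of the graph. *)

theory Defs
  imports Main
begin

definition simple_graph :: "'a set \<Rightarrow> 'a set set \<Rightarrow> bool" where
  "simple_graph V E \<longleftrightarrow> finite V \<and> (\<forall>e\<in>E. \<exists>u v. e = {u, v} \<and> u \<noteq> v \<and> u \<in> V \<and> v \<in> V)"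

definition walk :: "'a set \<Rightarrow> 'a set set \<Rightarrow> 'a list \<Rightarrow> bool" where
  "walk V E xs \<longleftrightarrow> xs \<noteq> [] \<and> set xs \<subseteq> V \<and>
     (\<forall>i. Suc i < length xs \<longrightarrow> {xs ! i, xs ! Suc i} \<in> E)"

definition connected_graph :: "'a set \<Rightarrow> 'a set set \<Rightarrow> bool" where
  "connected_graph V E \<longleftrightarrow> V \<noteq> {} \<and>
     (\<forall>u\<in>V. \<forall>v\<in>V. \<exists>xs. walk V E xs \<and> hd xs = u \<and> last xs = v)"

definition has_cycle :: "'a set \<Rightarrow> 'a set set \<Rightarrow> bool" where
  "has_cycle V E \<longleftrightarrow> (\<exists>xs. walk V E xs \<and> distinct xs \<and> length xs \<ge> 3 \<and> {last xs, hd xs} \<in> E)"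

definition is_tree :: "'a set \<Rightarrow> 'a set set \<Rightarrow> bool" where
  "is_tree V E \<longleftrightarrow> simple_graph V E \<and> connected_graph V E \<and> \<not> has_cycle V E"

definition dist :: "'a set \<Rightarrow> 'a set set \<Rightarrow> 'a \<Rightarrow> 'a \<Rightarrow> nat" where
  "dist V E u v = (LEAST k. \<exists>xs. walk V E xs \<and> hd xs = u \<and> last xs = v \<and> length xs = Suc k)"

text \<open>Wiener index: sum over unordered pairs of distances; the ordered double sum
counts every unordered pair twice (and d(u,u)=0).\<close>
definition wiener :: "'a set \<Rightarrow> 'a set set \<Rightarrow> nat" where
  "wiener V E = (\<Sum>u\<in>V. \<Sum>v\<in>V. dist V E u v) div 2"

definition ecc :: "'a set \<Rightarrow> 'a set set \<Rightarrow> 'a \<Rightarrow> nat" where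
  "ecc V E x = Max {dist V E x u | u. u \<in> V}"

definition diameter :: "'a set \<Rightarrow> 'a set set \<Rightarrow> nat" where
  "diameter V E = Max {dist V E u v | u v. u \<in> V \<and> v \<in> V}"

definition degree :: "'a set set \<Rightarrow> 'a \<Rightarrow> nat" where
  "degree E x = card {e \<in> E. x \<in> e}"

definition leaf :: "'a set \<Rightarrow> 'a set set \<Rightarrow> 'a \<Rightarrow> bool" where
  "leaf V E x \<longleftrightarrow> x \<in> V \<and> degree E x = 1"

text \<open>Maximum Wiener index among trees of the same order and diameter. Every tree is
isomorphic to one on a vertex set of naturals, so competitors range over such trees.\<close>
definition max_wiener_tree :: "'a set \<Rightarrow> 'a set set \<Rightarrow> bool" where
  "max_wiener_tree V E \<longleftrightarrow> is_tree V E \<and>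
     (\<forall>(V' :: nat set) E'. is_tree V' E' \<and> card V' = card V \<and> diameter V' E' = diameter V E
        \<longrightarrow> wiener V' E' \<le> wiener V E)"

end

theory Submission
  imports Defs
begin

abbreviation ch :: "'a set set \<Rightarrow> 'a list \<Rightarrow> bool" where
  "ch E xs \<equiv> successively (\<lambda>a b. {a,b} \<in> E) xs"

lemma walk_iff: "walk V E xs \<longleftrightarrow> xs \<noteq> [] \<and> set xs \<subseteq> V \<and> ch E xs"
  by (simp add: walk_def successively_conv_nth)

lemma ch_pot:
  fixes f :: "'a \<Rightarrow> int"
  assumes "ch E xs" "xs \<noteq> []" "\<And>v w. {v,w} \<in> E \<Longrightarrow> f w \<le> f v + 1"
  shows "f (last xs) \<le> f (hd xs) + int (length xs - 1)"
  using assms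
proof (induction xs)
  case Nil then show ?case by simp
next
  case (Cons a xs)
  show ?case
  proof (cases xs)
    case Nil then show ?thesis by simp
  next
    case (Cons b ys)
    have "{a,b} \<in> E" "ch E xs" using Cons.prems Cons by auto
    then have "f (last xs) \<le> f b + int (length xs - 1)" using Cons.IH Cons.prems Cons by auto
    moreover have "f b \<le> f a + 1" using \<open>{a,b} \<in> E\<close> Cons.prems by blast
    ultimately show ?thesis using Cons by auto
  qed
qed

lemma ch_join:
  assumes "ch E xs" "ch E (b # zs)" "xs \<noteq> []" "last xs = b"
  shows "ch E (xs @ zs)"
  using assms by (auto simp: successively_append_iff successively_Cons)

locale cg =
  fixes V :: "'a set" and E :: "'a set set"
  assumes conn: "connected_graph V E" and sg: "simple_graph V E"
begin

lemma finV: "finite V" using sg by (simp add: simple_graph_def)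

lemma edge_in: "{a,b} \<in> E \<Longrightarrow> a \<in> V \<and> b \<in> V"
  using sg unfolding simple_graph_def by (metis doubleton_eq_iff insertI1)

lemma edge_ne: "{a,b} \<in> E \<Longrightarrow> a \<noteq> b"
  using sg unfolding simple_graph_def by (metis doubleton_eq_iff insert_absorb2)

lemma dist_walk:
  assumes "a \<in> V" "b \<in> V"
  shows "\<exists>xs. walk V E xs \<and> hd xs = a \<and> last xs = b \<and> length xs = Suc (dist V E a b)"
proof -
  obtain xs where xs: "walk V E xs" "hd xs = a" "last xs = b"
    using conn assms unfolding connected_graph_def by blast
  then have "xs \<noteq> []" by (simp add: walk_def)
  then have "\<exists>k xs. walk V E xs \<and> hd xs = a \<and> last xs = b \<and> length xs = Suc k"
    using xs by (intro exI[of _ "length xs - 1"] exI[of _ xs]) auto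
  then show ?thesis unfolding dist_def by (rule LeastI_ex)
qed

lemma dist_le:
  assumes "walk V E xs" "hd xs = a" "last xs = b"
  shows "dist V E a b \<le> length xs - 1"
proof -
  have "xs \<noteq> []" using assms by (simp add: walk_def)
  then show ?thesis unfolding dist_def using assms
    by (intro Least_le) (rule exI[of _ xs], auto)
qed

lemma dist_le_ch:
  assumes "ch E xs" "xs \<noteq> []" "set xs \<subseteq> V" "hd xs = a" "last xs = b"
  shows "dist V E a b \<le> length xs - 1"
  using dist_le[of xs a b] assms by (simp add: walk_iff)

lemma dist_self: "a \<in> V \<Longrightarrow> dist V E a a = 0"
  using dist_le[of "[a]" a a] by (simp add: walk_iff)

lemma dist_zero: "a \<in> V \<Longrightarrow> b \<in> V \<Longrightarrow> dist V E a b = 0 \<Longrightarrow> a = b"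
  using dist_walk[of a b] by (auto simp: walk_iff) (metis last_ConsL list.sel(1) length_0_conv length_Suc_conv)

lemma dist_sym_le: "a \<in> V \<Longrightarrow> b \<in> V \<Longrightarrow> dist V E b a \<le> dist V E a b"
proof -
  assume "a \<in> V" "b \<in> V"
  then obtain xs where xs: "walk V E xs" "hd xs = a" "last xs = b" "length xs = Suc (dist V E a b)"
    using dist_walk by blast
  have "walk V E (rev xs)" using xs(1) by (auto simp: walk_iff insert_commute)
  moreover have "hd (rev xs) = b" "last (rev xs) = a" using xs 
    by (auto simp: hd_rev last_rev)
  ultimately show ?thesis using dist_le[of "rev xs" b a] xs(4) by simp
qed

lemma dist_sym: "a \<in> V \<Longrightarrow> b \<in> V \<Longrightarrow> dist V E a b = dist V E b a"
  using dist_sym_le by (simp add: le_antisym)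

lemma dist_tri:
  assumes "a \<in> V" "b \<in> V" "c \<in> V"
  shows "dist V E a c \<le> dist V E a b + dist V E b c"
proof -
  obtain xs where xs: "walk V E xs" "hd xs = a" "last xs = b" "length xs = Suc (dist V E a b)"
    using dist_walk assms by blast
  obtain ys where ys: "walk V E ys" "hd ys = b" "last ys = c" "length ys = Suc (dist V E b c)"
    using dist_walk assms by blast
  have ys': "ys = b # tl ys" using ys by (cases ys) (auto simp: walk_iff)
  have "walk V E (xs @ tl ys)"
    using xs ys ys' unfolding walk_iff
    using ch_join[of E xs b "tl ys"] by (auto simp: walk_iff) (metis list.set_sel(2) subsetD)
  moreover have "hd (xs @ tl ys) = a" using xs by (auto simp: walk_iff)
  moreover have "last (xs @ tl ys) = c" using xs ys ys'
    by (metis append_butlast_last_id append_is_Nil_conv last_appendR list.simps(3) walk_def last_ConsR last_append last.simps)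
  ultimately show ?thesis using dist_le[of "xs @ tl ys" a c] xs ys by simp
qed

lemma dist_edge: "{a,b} \<in> E \<Longrightarrow> dist V E a b \<le> 1"
  using dist_le[of "[a,b]" a b] edge_in[of a b] by (simp add: walk_iff)

lemma dist_lip: "{v,w} \<in> E \<Longrightarrow> c \<in> V \<Longrightarrow> dist V E c w \<le> dist V E c v + 1"
  using dist_tri[of c v w] dist_edge[of v w] edge_in[of v w] by simp

lemma pot:
  fixes f :: "'a \<Rightarrow> int"
  assumes "\<And>v w. {v,w} \<in> E \<Longrightarrow> f w \<le> f v + 1" "a \<in> V" "b \<in> V"
  shows "f b - f a \<le> int (dist V E a b)"
proof -
  obtain xs where xs: "walk V E xs" "hd xs = a" "last xs = b" "length xs = Suc (dist V E a b)"
    using dist_walk assms by blast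
  then show ?thesis using ch_pot[of E xs f] assms(1) by (auto simp: walk_iff)
qed

end

definition cut :: "'a set \<Rightarrow> 'a set set \<Rightarrow> 'a set \<Rightarrow> 'a \<Rightarrow> 'a \<Rightarrow> bool" where
  "cut V E S s p \<longleftrightarrow> S \<subseteq> V \<and> s \<in> S \<and> p \<in> V \<and> p \<notin> S \<and> {s,p} \<in> E \<and>
     (\<forall>v w. {v,w} \<in> E \<longrightarrow> v \<in> S \<longrightarrow> w \<notin> S \<longrightarrow> v = s \<and> w = p)"

context cg begin

lemma cut_dist:
  assumes c: "cut V E S s p" and a: "a \<in> S" and b: "b \<in> V" "b \<notin> S"
  shows "dist V E a b = dist V E a s + 1 + dist V E p b"
proof -
  have SV: "S \<subseteq> V" "s \<in> S" "p \<in> V" "p \<notin> S" "{s,p} \<in> E"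
    and cr: "\<And>v w. {v,w} \<in> E \<Longrightarrow> v \<in> S \<Longrightarrow> w \<notin> S \<Longrightarrow> v = s \<and> w = p"
    using c unfolding cut_def by blast+
  have aV: "a \<in> V" "s \<in> V" using SV a by auto
  have "dist V E a b \<le> dist V E a s + dist V E s b" using dist_tri aV b by blast
  also have "dist V E s b \<le> dist V E s p + dist V E p b" using dist_tri aV b SV by blast
  also have "dist V E s p \<le> 1" using dist_edge SV by blast
  finally have up: "dist V E a b \<le> dist V E a s + 1 + dist V E p b" by simp
  define f where "f v = (if v \<in> S then int (dist V E a v) else int (dist V E a s) + 1 + int (dist V E p v))" for v
  have lip: "f w \<le> f v + 1" if e: "{v,w} \<in> E" for v w
  proof -
    have vw: "v \<in> V" "w \<in> V" using edge_in e by auto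
    have e': "{w,v} \<in> E" using e by (simp add: insert_commute)
    consider "v \<in> S" "w \<in> S" | "v \<notin> S" "w \<notin> S" | "v \<in> S" "w \<notin> S" | "v \<notin> S" "w \<in> S" by blast
    then show ?thesis
    proof cases
      case 1 then show ?thesis using dist_lip[OF e aV(1)] by (simp add: f_def)
    next
      case 2 then show ?thesis using dist_lip[OF e SV(3)] by (simp add: f_def)
    next
      case 3 then have "v = s" "w = p" using cr e by auto
      then show ?thesis using 3 dist_self SV by (simp add: f_def)
    next
      case 4 then have "w = s" "v = p" using cr e' by auto
      then show ?thesis using 4 dist_self SV by (simp add: f_def)
    qed
  qed
  have "f b - f a \<le> int (dist V E a b)" using pot[of f a b] lip aV b by blast
  then have "int (dist V E a s) + 1 + int (dist V E p b) \<le> int (dist V E a b)"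
    using a b dist_self aV by (simp add: f_def)
  then show ?thesis using up by linarith
qed

end

lemma dist_sub:
  assumes g1: "cg V E1" and g2: "cg V E2" and S: "S \<subseteq> V" "s \<in> S"
    and in2: "\<And>v w. {v,w} \<in> E1 \<Longrightarrow> v \<in> S \<Longrightarrow> w \<in> S \<Longrightarrow> {v,w} \<in> E2"
    and cr: "\<And>v w. {v,w} \<in> E1 \<Longrightarrow> v \<in> S \<Longrightarrow> w \<notin> S \<Longrightarrow> v = s"
    and a: "a \<in> S" "a' \<in> S"
  shows "dist V E2 a a' \<le> dist V E1 a a'"
proof -
  define f where "f v = (if v \<in> S then int (dist V E2 a v) else int (dist V E2 a s) + 1)" for v
  have lip: "f w \<le> f v + 1" if e: "{v,w} \<in> E1" for v w
  proof -
    have e': "{w,v} \<in> E1" using e by (simp add: insert_commute)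
    consider "v \<in> S" "w \<in> S" | "v \<notin> S" "w \<notin> S" | "v \<in> S" "w \<notin> S" | "v \<notin> S" "w \<in> S" by blast
    then show ?thesis
    proof cases
      case 1
      have "a \<in> V" using a S by auto
      then show ?thesis using cg.dist_lip[OF g2 in2[OF e 1], of a] 1 by (auto simp: f_def)
    next
      case 2 then show ?thesis by (simp add: f_def)
    next
      case 3 then have "v = s" using cr e by auto
      then show ?thesis using 3 by (simp add: f_def)
    next
      case 4 then have "w = s" using cr e' by auto
      then show ?thesis using 4 by (simp add: f_def)
    qed
  qed
  have "f a' - f a \<le> int (dist V E1 a a')" using cg.pot[OF g1, of f a a'] lip a S by blast
  then show ?thesis using a S cg.dist_self[OF g2, of a] by (auto simp: f_def)
qed

lemma lazy_remdups:
  "successively (\<lambda>a b. a = b \<or> P a b) xs \<Longrightarrow> successively P (remdups_adj xs)"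
  by (induction xs rule: remdups_adj.induct) (auto simp: successively_Cons)

lemma collapse:
  assumes "c \<in> A" "ch E1 xs"
    and in2: "\<And>v w. {v,w} \<in> E1 \<Longrightarrow> v \<in> A \<Longrightarrow> w \<in> A \<Longrightarrow> {v,w} \<in> E2"
    and cr: "\<And>v w. {v,w} \<in> E1 \<Longrightarrow> v \<in> A \<Longrightarrow> w \<notin> A \<Longrightarrow> v = c"
  shows "ch E2 (remdups_adj (map (\<lambda>v. if v \<in> A then v else c) xs))"
proof -
  have "successively (\<lambda>a b. a = b \<or> {a,b} \<in> E2) (map (\<lambda>v. if v \<in> A then v else c) xs)"
    unfolding successively_map
  proof (rule successively_mono[OF assms(2)])
    fix v w assume e: "{v,w} \<in> E1"
    have e': "{w,v} \<in> E1" using e by (simp add: insert_commute)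
    show "(if v \<in> A then v else c) = (if w \<in> A then w else c) \<or>
          {if v \<in> A then v else c, if w \<in> A then w else c} \<in> E2"
      using in2[OF e] cr[OF e] cr[OF e'] by auto
  qed
  then show ?thesis by (rule lazy_remdups)
qed

lemma distinctify:
  "ch E xs \<Longrightarrow> xs \<noteq> [] \<Longrightarrow> \<exists>ys. ch E ys \<and> distinct ys \<and> ys \<noteq> [] \<and> hd ys = hd xs \<and> last ys = last xs \<and> set ys \<subseteq> set xs"
proof (induction "length xs" arbitrary: xs rule: less_induct)
  case less
  show ?case
  proof (cases "distinct xs")
    case True then show ?thesis using less.prems by blast
  next
    case False
    then obtain as y bs cs where xs: "xs = as @ [y] @ bs @ [y] @ cs"
      using not_distinct_decomp by blast
    define zs where "zs = as @ [y] @ cs"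
    have "ch E (as @ [y])" using less.prems(1) unfolding xs
      by (auto simp: successively_append_iff)
    moreover have "ch E ((as @ [y] @ bs) @ (y # cs))" using less.prems(1) unfolding xs by simp
    then have "ch E (y # cs)" by (simp only: successively_append_iff)
    ultimately
    have "ch E zs" unfolding zs_def using ch_join[of E "as @ [y]" y cs] by simp
    moreover have "length zs < length xs" unfolding zs_def xs by simp
    moreover have "zs \<noteq> []" "hd zs = hd xs" "last zs = last xs" "set zs \<subseteq> set xs"
      unfolding zs_def xs by (auto simp: hd_append)
    ultimately show ?thesis using less.hyps[of zs] by fastforce
  qed
qed

lemma edge_cycle:
  assumes "{a,b} \<in> E" "a \<noteq> b" "ch (E - {{a,b}}) xs" "xs \<noteq> []" "set xs \<subseteq> V" "hd xs = a" "last xs = b"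
  shows "has_cycle V E"
proof -
  obtain ys where ys: "ch (E - {{a,b}}) ys" "distinct ys" "ys \<noteq> []" "hd ys = a" "last ys = b" "set ys \<subseteq> V"
    using distinctify[OF assms(3,4)] assms by blast
  have "length ys \<noteq> 1" using ys assms(2) by (cases ys) auto
  moreover have "length ys \<noteq> 2"
  proof
    assume "length ys = 2"
    then obtain u v where "ys = [u,v]" by (metis (no_types) One_nat_def Suc_1 length_0_conv length_Suc_conv)
    then show False using ys by auto
  qed
  moreover have "length ys \<noteq> 0" using ys(3) by simp
  ultimately have "length ys \<ge> 3" by presburger
  moreover have "walk V E ys" using ys unfolding walk_iff by (auto elim: successively_mono)
  moreover have "{last ys, hd ys} \<in> E" using ys assms(1) by (simp add: insert_commute)
  ultimately show ?thesis unfolding has_cycle_def using ys(2) by blast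
qed

lemma cycle_edge:
  assumes "has_cycle V E"
  shows "\<exists>xs. ch (E - {{last xs, hd xs}}) xs \<and> xs \<noteq> [] \<and> set xs \<subseteq> V \<and> {last xs, hd xs} \<in> E \<and> last xs \<noteq> hd xs"
proof -
  obtain xs where xs: "walk V E xs" "distinct xs" "length xs \<ge> 3" "{last xs, hd xs} \<in> E"
    using assms unfolding has_cycle_def by blast
  have ne: "xs \<noteq> []" using xs by auto
  have l: "last xs = xs ! (length xs - 1)" "hd xs = xs ! 0" using ne by (auto simp: last_conv_nth hd_conv_nth)
  have i1: "length xs - 1 < length xs" "0 < length xs" using xs(3) by auto
  have "xs ! (length xs - 1) \<noteq> xs ! 0" 
    unfolding nth_eq_iff_index_eq[OF xs(2) i1] using xs(3) by simp
  then have "last xs \<noteq> hd xs" using l by simp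
  moreover have "ch (E - {{last xs, hd xs}}) xs"
    unfolding successively_conv_nth
  proof (intro allI impI)
    fix i assume i: "Suc i < length xs"
    have "{xs ! i, xs ! Suc i} \<in> E" using xs(1) i by (simp add: walk_def)
    moreover have "{xs ! i, xs ! Suc i} \<noteq> {last xs, hd xs}"
    proof
      assume eq: "{xs ! i, xs ! Suc i} = {last xs, hd xs}"
      have d: "xs ! i = xs ! j \<longleftrightarrow> i = j" if "i < length xs" "j < length xs" for i j
        using xs(2) that by (simp add: nth_eq_iff_index_eq)
      from eq have "(xs ! i = last xs \<and> xs ! Suc i = hd xs) \<or> (xs ! i = hd xs \<and> xs ! Suc i = last xs)"
        by (auto simp: doubleton_eq_iff)
      then show False
      proof
        assume h: "xs ! i = last xs \<and> xs ! Suc i = hd xs"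
        have "Suc i = 0" using h l d[of "Suc i" 0] i ne by simp
        then show False by simp
      next
        assume h: "xs ! i = hd xs \<and> xs ! Suc i = last xs"
        have "i = 0" using h l d[of i 0] i ne by simp
        moreover have "Suc i = length xs - 1" using h l d[of "Suc i" "length xs - 1"] i ne by simp
        ultimately show False using xs(3) by simp
      qed
    qed
    ultimately show "{xs ! i, xs ! Suc i} \<in> E - {{last xs, hd xs}}" by simp
  qed
  ultimately show ?thesis using xs ne by (auto simp: walk_iff)
qed




definition reach :: "'a set \<Rightarrow> 'a set set \<Rightarrow> 'a \<Rightarrow> 'a \<Rightarrow> bool" where
  "reach V E a b \<longleftrightarrow> (\<exists>xs. ch E xs \<and> xs \<noteq> [] \<and> set xs \<subseteq> V \<and> hd xs = a \<and> last xs = b)"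

lemma reach_sym: "reach V E a b \<Longrightarrow> reach V E b a"
proof -
  assume "reach V E a b"
  then obtain xs where xs: "ch E xs" "xs \<noteq> []" "set xs \<subseteq> V" "hd xs = a" "last xs = b"
    unfolding reach_def by blast
  have "ch E (rev xs)" using xs(1) by (simp add: insert_commute)
  moreover have "rev xs \<noteq> []" "set (rev xs) \<subseteq> V" "hd (rev xs) = b" "last (rev xs) = a"
    using xs by (auto simp: hd_rev last_rev)
  ultimately show ?thesis unfolding reach_def by blast
qed

lemma reach_trans: "reach V E a b \<Longrightarrow> reach V E b c \<Longrightarrow> reach V E a c"
proof -
  assume "reach V E a b" "reach V E b c"
  then obtain xs ys where xs: "ch E xs" "xs \<noteq> []" "set xs \<subseteq> V" "hd xs = a" "last xs = b"
    and ys: "ch E ys" "ys \<noteq> []" "set ys \<subseteq> V" "hd ys = b" "last ys = c"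
    unfolding reach_def by blast
  have ys': "ys = b # tl ys" using ys by (cases ys) auto
  have "ch E (xs @ tl ys)" using ch_join[of E xs b "tl ys"] xs ys ys' by simp
  moreover have "set (xs @ tl ys) \<subseteq> V" using xs ys by (auto dest: list.set_sel(2))
  moreover have "last (xs @ tl ys) = c" using xs ys ys'
    by (metis last_ConsL last_ConsR last_append)
  ultimately show ?thesis unfolding reach_def using xs by (intro exI[of _ "xs @ tl ys"]) auto
qed

lemma reach_edge: "{a,b} \<in> E \<Longrightarrow> a \<in> V \<Longrightarrow> b \<in> V \<Longrightarrow> reach V E a b"
  unfolding reach_def by (intro exI[of _ "[a,b]"]) auto

lemma reach_refl: "a \<in> V \<Longrightarrow> reach V E a a"
  unfolding reach_def by (intro exI[of _ "[a]"]) auto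

lemma connected_iff: "connected_graph V E \<longleftrightarrow> V \<noteq> {} \<and> (\<forall>a\<in>V. \<forall>b\<in>V. reach V E a b)"
  unfolding connected_graph_def reach_def walk_iff by blast

lemma closure:
  assumes "ch E1 xs" "xs \<noteq> []" "hd xs \<in> A" "\<And>v w. {v,w} \<in> E1 \<Longrightarrow> v \<in> A \<Longrightarrow> w \<in> A"
  shows "set xs \<subseteq> A"
  using assms
proof (induction xs)
  case Nil then show ?case by simp
next
  case (Cons a xs)
  show ?case
  proof (cases xs)
    case Nil then show ?thesis using Cons by simp
  next
    case (Cons b ys)
    have "{a,b} \<in> E1" "ch E1 xs" using Cons.prems Cons by auto
    then have "b \<in> A" using Cons.prems by auto
    then have "set xs \<subseteq> A" using Cons.IH Cons.prems Cons \<open>ch E1 xs\<close> by auto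
    then show ?thesis using Cons.prems by auto
  qed
qed

lemma collapse_reach:
  assumes "c \<in> A" "A \<subseteq> V" "ch E1 xs" "xs \<noteq> []" "set xs \<subseteq> V" "hd xs \<in> A" "last xs \<in> A"
    and in2: "\<And>v w. {v,w} \<in> E1 \<Longrightarrow> v \<in> A \<Longrightarrow> w \<in> A \<Longrightarrow> {v,w} \<in> E2"
    and cr: "\<And>v w. {v,w} \<in> E1 \<Longrightarrow> v \<in> A \<Longrightarrow> w \<notin> A \<Longrightarrow> v = c"
  shows "reach V E2 (hd xs) (last xs)"
proof -
  define ys where "ys = remdups_adj (map (\<lambda>v. if v \<in> A then v else c) xs)"
  have "ch E2 ys" unfolding ys_def using collapse[of c A E1 xs E2] assms by blast
  moreover have "ys \<noteq> []" "hd ys = hd xs" "last ys = last xs" "set ys \<subseteq> V"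
    unfolding ys_def using assms by (auto simp: hd_map last_map)
  ultimately show ?thesis unfolding reach_def by blast
qed

locale swap =
  fixes V :: "'a set" and E :: "'a set set" and S :: "'a set" and s p u :: 'a and E' :: "'a set set"
  assumes tree: "is_tree V E" and ct: "cut V E S s p" and uV: "u \<in> V" and uS: "u \<notin> S" and up: "u \<noteq> p"
  defines "E' \<equiv> (E - {{s,p}}) \<union> {{s,u}}"
begin

lemma g: "cg V E" using tree unfolding is_tree_def cg_def by blast

lemma acyc: "\<not> has_cycle V E" using tree unfolding is_tree_def by blast

lemma SV: "S \<subseteq> V" "s \<in> S" "p \<in> V" "p \<notin> S" "{s,p} \<in> E" "s \<in> V"
  using ct unfolding cut_def by auto

lemma cr: "{v,w} \<in> E \<Longrightarrow> v \<in> S \<Longrightarrow> w \<notin> S \<Longrightarrow> v = s \<and> w = p"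
  using ct unfolding cut_def by blast

lemma su_ne: "s \<noteq> u" using SV uS by auto

lemma E'_edge: "{v,w} \<in> E' \<longleftrightarrow> ({v,w} \<in> E \<and> {v,w} \<noteq> {s,p}) \<or> {v,w} = {s,u}"
  unfolding E'_def by auto

lemma simple': "simple_graph V E'"
proof -
  have sg: "simple_graph V E" using tree is_tree_def by blast
  have "\<exists>a b. e = {a, b} \<and> a \<noteq> b \<and> a \<in> V \<and> b \<in> V" if "e \<in> E'" for e
  proof (cases "e = {s,u}")
    case True then show ?thesis using SV uV su_ne by blast
  next
    case False then have "e \<in> E" using that E'_def by auto
    then show ?thesis using sg unfolding simple_graph_def by blast
  qed
  then show ?thesis using sg unfolding simple_graph_def by blast
qed

lemma cut': "cut V E' S s u"
proof -
  have "v = s \<and> w = u" if e: "{v,w} \<in> E'" "v \<in> S" "w \<notin> S" for v w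
  proof (cases "{v,w} = {s,u}")
    case True then show ?thesis using e SV uS by (auto simp: doubleton_eq_iff)
  next
    case False
    then have "{v,w} \<in> E" "{v,w} \<noteq> {s,p}" using e E'_edge by auto
    then show ?thesis using cr e by auto
  qed
  then show ?thesis unfolding cut_def using SV uV uS E'_def by auto
qed

lemma conn': "connected_graph V E'"
proof -
  have toS: "reach V E' a s" if a: "a \<in> S" for a
  proof -
    obtain xs where xs: "walk V E xs" "hd xs = a" "last xs = s"
      using cg.dist_walk[OF g, of a s] a SV by blast
    have in2: "{v,w} \<in> E'" if "{v,w} \<in> E" "v \<in> S" "w \<in> S" for v w
    proof -
      have "{v,w} \<noteq> {s,p}" using that SV by (auto simp: doubleton_eq_iff)
      then show ?thesis using that(1) E'_edge by blast
    qed
    have cr2: "v = s" if "{v,w} \<in> E" "v \<in> S" "w \<notin> S" for v w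
      using cr that by blast
    have c: "ch E xs" "xs \<noteq> []" "set xs \<subseteq> V" using xs unfolding walk_iff by auto
    have "reach V E' (hd xs) (last xs)"
      by (rule collapse_reach[of s S V E xs E', OF SV(2) SV(1) c]) (use xs a SV(2) in2 cr2 in auto)
    then show ?thesis using xs by simp
  qed
  have toU: "reach V E' b u" if b: "b \<in> V" "b \<notin> S" for b
  proof -
    obtain xs where xs: "walk V E xs" "hd xs = b" "last xs = u"
      using cg.dist_walk[OF g, of b u] b uV by blast
    have A: "p \<in> V - S" "V - S \<subseteq> V" using SV by auto
    have in2: "{v,w} \<in> E'" if "{v,w} \<in> E" "v \<in> V - S" "w \<in> V - S" for v w
    proof -
      have "{v,w} \<noteq> {s,p}" using that SV by (auto simp: doubleton_eq_iff)
      then show ?thesis using that(1) E'_edge by blast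
    qed
    have cr2: "v = p" if e: "{v,w} \<in> E" "v \<in> V - S" "w \<notin> V - S" for v w
    proof -
      have "w \<in> V" using cg.edge_in[OF g e(1)] by simp
      then have "w \<in> S" using e by auto
      moreover have "{w,v} \<in> E" using e by (simp add: insert_commute)
      ultimately show ?thesis using cr e by auto
    qed
    have c: "ch E xs" "xs \<noteq> []" "set xs \<subseteq> V" using xs unfolding walk_iff by auto
    have "reach V E' (hd xs) (last xs)"
      by (rule collapse_reach[of p "V - S" V E xs E', OF A c]) (use xs b uV uS in2 cr2 in auto)
    then show ?thesis using xs by simp
  qed
  have "reach V E' u s" using reach_edge[of u s E' V] E'_edge uV SV by (simp add: insert_commute)
  then have all: "reach V E' a s" if "a \<in> V" for a
  proof (cases "a \<in> S")
    case True then show ?thesis using toS by blast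
  next
    case False then show ?thesis using toU[of a] that reach_trans[of V E' a u s] \<open>reach V E' u s\<close> by blast
  qed
  have "reach V E' a b" if "a \<in> V" "b \<in> V" for a b
    using all[OF that(1)] reach_sym[OF all[OF that(2)]] reach_trans by metis
  then show ?thesis unfolding connected_iff using SV by blast
qed

lemma g': "cg V E'" using conn' simple' by (simp add: cg_def)

lemma acyc': "\<not> has_cycle V E'"
proof
  assume "has_cycle V E'"
  then obtain xs where xs: "ch (E' - {{last xs, hd xs}}) xs" "xs \<noteq> []" "set xs \<subseteq> V"
      "{last xs, hd xs} \<in> E'" "last xs \<noteq> hd xs"
    using cycle_edge by blast
  define a where "a = hd xs"
  define b where "b = last xs"
  have ab: "{last xs, hd xs} = {a,b}" unfolding a_def b_def by (simp add: insert_commute)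
  have xs1: "ch (E' - {{a,b}}) xs" using xs(1) ab by simp
  have eab: "{a,b} \<in> E'" using xs(4) ab by simp
  have abne: "a \<noteq> b" using xs(5) a_def b_def by simp
  have aV: "a \<in> V" "b \<in> V" using xs(2,3) a_def b_def by auto
  have cr': "v = s \<and> w = u" if "{v,w} \<in> E'" "v \<in> S" "w \<notin> S" for v w
    using cut' that unfolding cut_def by blast
  have eV: "w \<in> V" if "{v,w} \<in> E'" for v w using cg.edge_in[OF g' that] by blast
  show False
  proof (cases "{a,b} = {s,u}")
    case True
    have clS: "w \<in> S" if "{v,w} \<in> E' - {{a,b}}" "v \<in> S" for v w
    proof (rule ccontr)
      assume "w \<notin> S"
      then have "v = s" "w = u" using cr' that by auto
      then show False using that True by simp
    qed
    have clR: "w \<in> V - S" if e: "{v,w} \<in> E' - {{a,b}}" "v \<in> V - S" for v w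
    proof (rule ccontr)
      assume "w \<notin> V - S"
      then have "w \<in> S" using eV e by blast
      moreover have "{w,v} \<in> E'" using e by (simp add: insert_commute)
      ultimately have "w = s" "v = u" using cr' e by auto
      then show False using e True by (simp add: insert_commute)
    qed
    show False
    proof (cases "a \<in> S")
      case aS: True
      have "set xs \<subseteq> S" by (rule closure[OF xs1 xs(2)]) (use aS a_def clS in auto)
      then have "b \<in> S" using xs(2) b_def last_in_set by blast
      then show False using True aS uS SV(2) abne by (auto simp: doubleton_eq_iff)
    next
      case aS: False
      have "set xs \<subseteq> V - S" by (rule closure[OF xs1 xs(2)]) (use aS aV a_def clR in auto)
      then have "b \<in> V - S" using xs(2) b_def last_in_set by blast
      then have "b \<notin> S" by simp
      then show False using True aS uS SV(2) abne by (auto simp: doubleton_eq_iff)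
    qed
  next
    case False
    have eE: "{a,b} \<in> E" using eab False E'_edge by blast
    have ins: "{v,w} \<in> E - {{a,b}}" if "{v,w} \<in> E' - {{a,b}}" "{v,w} \<noteq> {s,u}" for v w
      using that E'_edge by blast
    show False
    proof (cases "a \<in> S")
      case aS: True
      have bS: "b \<in> S"
      proof (rule ccontr)
        assume "b \<notin> S"
        then have "a = s" "b = u" using cr'[OF eab aS] by auto
        then show False using False by simp
      qed
      have in2: "{v,w} \<in> E - {{a,b}}" if "{v,w} \<in> E' - {{a,b}}" "v \<in> S" "w \<in> S" for v w
      proof -
        have "{v,w} \<noteq> {s,u}" using that uS by (auto simp: doubleton_eq_iff)
        then show ?thesis using ins that(1) by blast
      qed
      have cr2: "v = s" if "{v,w} \<in> E' - {{a,b}}" "v \<in> S" "w \<notin> S" for v w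
        using cr' that by blast
      have "reach V (E - {{a,b}}) (hd xs) (last xs)"
        by (rule collapse_reach[of s S V "E' - {{a,b}}" xs, OF SV(2) SV(1) xs1 xs(2,3)])
           (use aS bS a_def b_def in2 cr2 in auto)
      then show False using edge_cycle[OF eE abne] acyc unfolding reach_def a_def b_def by blast
    next
      case aS: False
      have bS: "b \<notin> S"
      proof
        assume "b \<in> S"
        moreover have "{b,a} \<in> E'" using eab by (simp add: insert_commute)
        ultimately have "b = s" "a = u" using cr' aS by auto
        then show False using False by (simp add: insert_commute)
      qed
      have in2: "{v,w} \<in> E - {{a,b}}" if "{v,w} \<in> E' - {{a,b}}" "v \<in> V - S" "w \<in> V - S" for v w
      proof -
        have "{v,w} \<noteq> {s,u}" using that SV(2) by (auto simp: doubleton_eq_iff)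
        then show ?thesis using ins that(1) by blast
      qed
      have cr2: "v = u" if e: "{v,w} \<in> E' - {{a,b}}" "v \<in> V - S" "w \<notin> V - S" for v w
      proof -
        have "w \<in> S" using eV e by blast
        moreover have "{w,v} \<in> E'" using e by (simp add: insert_commute)
        ultimately show "v = u" using cr' e by blast
      qed
      have A: "u \<in> V - S" "V - S \<subseteq> V" using uV uS by auto
      have "reach V (E - {{a,b}}) (hd xs) (last xs)"
        by (rule collapse_reach[of u "V - S" V "E' - {{a,b}}" xs, OF A xs1 xs(2,3)])
           (use aS bS aV a_def b_def in2 cr2 in auto)
      then show False using edge_cycle[OF eE abne] acyc unfolding reach_def a_def b_def by blast
    qed
  qed
qed

lemma tree': "is_tree V E'" using simple' conn' acyc' by (simp add: is_tree_def)

end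


context swap begin

lemma cr_R: "{v,w} \<in> E \<Longrightarrow> v \<in> V - S \<Longrightarrow> w \<notin> V - S \<Longrightarrow> v = p"
proof -
  assume e: "{v,w} \<in> E" "v \<in> V - S" "w \<notin> V - S"
  have "w \<in> V" using cg.edge_in[OF g e(1)] by blast
  then have "w \<in> S" using e by blast
  moreover have "{w,v} \<in> E" using e by (simp add: insert_commute)
  ultimately show "v = p" using cr e by blast
qed

lemma cr'_R: "{v,w} \<in> E' \<Longrightarrow> v \<in> V - S \<Longrightarrow> w \<notin> V - S \<Longrightarrow> v = u"
proof -
  assume e: "{v,w} \<in> E'" "v \<in> V - S" "w \<notin> V - S"
  have "w \<in> V" using cg.edge_in[OF g' e(1)] by blast
  then have "w \<in> S" using e by blast
  moreover have "{w,v} \<in> E'" using e by (simp add: insert_commute)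
  ultimately show "v = u" using cut' e unfolding cut_def by blast
qed

lemma dS: assumes "a \<in> S" "a' \<in> S" shows "dist V E' a a' = dist V E a a'"
proof -
  have 1: "dist V E' a a' \<le> dist V E a a'"
  proof (rule dist_sub[OF g g' SV(1,2) _ _ assms])
    fix v w assume "{v,w} \<in> E" "v \<in> S" "w \<in> S"
    moreover then have "{v,w} \<noteq> {s,p}" using SV by (auto simp: doubleton_eq_iff)
    ultimately show "{v,w} \<in> E'" using E'_edge by blast
  next
    fix v w assume "{v,w} \<in> E" "v \<in> S" "w \<notin> S" then show "v = s" using cr by blast
  qed
  have 2: "dist V E a a' \<le> dist V E' a a'"
  proof (rule dist_sub[OF g' g SV(1,2) _ _ assms])
    fix v w assume "{v,w} \<in> E'" "v \<in> S" "w \<in> S"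
    moreover then have "{v,w} \<noteq> {s,u}" using uS by (auto simp: doubleton_eq_iff)
    ultimately show "{v,w} \<in> E" using E'_edge by blast
  next
    fix v w assume "{v,w} \<in> E'" "v \<in> S" "w \<notin> S" then show "v = s" using cut' unfolding cut_def by blast
  qed
  show ?thesis using 1 2 by simp
qed

lemma dR: assumes "b \<in> V - S" "b' \<in> V - S" shows "dist V E' b b' = dist V E b b'"
proof -
  have A: "V - S \<subseteq> V" "p \<in> V - S" "u \<in> V - S" using SV uV uS by auto
  have 1: "dist V E' b b' \<le> dist V E b b'"
  proof (rule dist_sub[OF g g' A(1,2) _ _ assms])
    fix v w assume "{v,w} \<in> E" "v \<in> V - S" "w \<in> V - S"
    moreover then have "{v,w} \<noteq> {s,p}" using SV by (auto simp: doubleton_eq_iff)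
    ultimately show "{v,w} \<in> E'" using E'_edge by blast
  next
    fix v w assume "{v,w} \<in> E" "v \<in> V - S" "w \<notin> V - S" then show "v = p" using cr_R by blast
  qed
  have 2: "dist V E b b' \<le> dist V E' b b'"
  proof (rule dist_sub[OF g' g A(1,3) _ _ assms])
    fix v w assume "{v,w} \<in> E'" "v \<in> V - S" "w \<in> V - S"
    moreover then have "{v,w} \<noteq> {s,u}" using SV by (auto simp: doubleton_eq_iff)
    ultimately show "{v,w} \<in> E" using E'_edge by blast
  next
    fix v w assume "{v,w} \<in> E'" "v \<in> V - S" "w \<notin> V - S" then show "v = u" using cr'_R by blast
  qed
  show ?thesis using 1 2 by simp
qed

lemma dSR: assumes "a \<in> S" "b \<in> V - S"
  shows "dist V E' a b = dist V E a s + 1 + dist V E u b"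
proof -
  have "dist V E' a b = dist V E' a s + 1 + dist V E' u b"
    using cg.cut_dist[OF g' cut' assms(1)] assms(2) by blast
  then show ?thesis using dS[OF assms(1) SV(2)] dR[of u b] uV uS assms(2) by simp
qed

lemma dSR0: assumes "a \<in> S" "b \<in> V - S"
  shows "dist V E a b = dist V E a s + 1 + dist V E p b"
  using cg.cut_dist[OF g ct assms(1)] assms(2) by blast

definition F :: "'a set set \<Rightarrow> nat" where
  "F EE = (\<Sum>a\<in>V. \<Sum>b\<in>V. dist V EE a b)"

lemma F_diff:
  "int (F E') = int (F E) + 2 * int (card S) * (\<Sum>b\<in>V - S. int (dist V E u b) - int (dist V E p b))"
proof -
  define \<delta> where "\<delta> b = int (dist V E u b) - int (dist V E p b)" for b
  define \<Delta> where "\<Delta> = (\<Sum>b\<in>V - S. \<delta> b)"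
  have fin: "finite V" using cg.finV[OF g] .
  have finS: "finite S" using fin SV(1) finite_subset by blast
  have pt: "int (dist V E' a b) - int (dist V E a b) =
      (if a \<in> S \<and> b \<notin> S then \<delta> b else if a \<notin> S \<and> b \<in> S then \<delta> a else 0)"
    if ab: "a \<in> V" "b \<in> V" for a b
  proof -
    consider "a \<in> S" "b \<in> S" | "a \<notin> S" "b \<notin> S" | "a \<in> S" "b \<notin> S" | "a \<notin> S" "b \<in> S" by blast
    then show ?thesis
    proof cases
      case 1 then show ?thesis using dS by simp
    next
      case 2 then show ?thesis using dR ab by simp
    next
      case 3 then show ?thesis using dSR[of a b] dSR0[of a b] ab by (simp add: \<delta>_def)
    next
      case 4
      have "dist V E' a b = dist V E' b a" using cg.dist_sym[OF g'] ab by blast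
      moreover have "dist V E a b = dist V E b a" using cg.dist_sym[OF g] ab by blast
      ultimately show ?thesis using 4 dSR[of b a] dSR0[of b a] ab by (simp add: \<delta>_def)
    qed
  qed
  have row: "(\<Sum>b\<in>V. int (dist V E' a b) - int (dist V E a b)) =
      (if a \<in> S then \<Delta> else int (card S) * \<delta> a)" if a: "a \<in> V" for a
  proof -
    have "(\<Sum>b\<in>V. int (dist V E' a b) - int (dist V E a b)) =
       (\<Sum>b\<in>V. (if a \<in> S \<and> b \<notin> S then \<delta> b else if a \<notin> S \<and> b \<in> S then \<delta> a else 0))"
      using pt a by (intro sum.cong) auto
    also have "\<dots> = (if a \<in> S then \<Delta> else int (card S) * \<delta> a)"
    proof (cases "a \<in> S")
      case True
      then have "(\<Sum>b\<in>V. (if a \<in> S \<and> b \<notin> S then \<delta> b else if a \<notin> S \<and> b \<in> S then \<delta> a else 0))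
         = (\<Sum>b\<in>V. (if b \<in> V - S then \<delta> b else 0))" by (intro sum.cong) auto
      also have "\<dots> = \<Delta>"
      proof -
        have e: "V \<inter> {b. b \<in> V - S} = V - S" "V \<inter> {b. b \<notin> S} = V - S" by blast+
        show ?thesis unfolding \<Delta>_def using fin by (simp add: sum.If_cases e)
      qed
      finally show ?thesis using True by simp
    next
      case False
      then have "(\<Sum>b\<in>V. (if a \<in> S \<and> b \<notin> S then \<delta> b else if a \<notin> S \<and> b \<in> S then \<delta> a else 0))
         = (\<Sum>b\<in>V. (if b \<in> S then \<delta> a else 0))" by (intro sum.cong) auto
      also have "\<dots> = int (card S) * \<delta> a" using fin SV(1)
        by (simp add: sum.If_cases Int_absorb1)
      finally show ?thesis using False by simp
    qed
    finally show ?thesis .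
  qed
  have "int (F E') - int (F E) = (\<Sum>a\<in>V. \<Sum>b\<in>V. int (dist V E' a b) - int (dist V E a b))"
    unfolding F_def by (simp add: sum_subtractf of_nat_sum)
  also have "\<dots> = (\<Sum>a\<in>V. (if a \<in> S then \<Delta> else int (card S) * \<delta> a))"
    using row by (intro sum.cong) auto
  also have "\<dots> = int (card S) * \<Delta> + int (card S) * \<Delta>"
    using fin SV(1) by (simp add: sum.If_cases Int_absorb1 \<Delta>_def sum_distrib_left Diff_eq)
  finally show ?thesis unfolding \<Delta>_def \<delta>_def by simp
qed

lemma wiener_gain:
  assumes "(\<Sum>b\<in>V - S. int (dist V E p b)) < (\<Sum>b\<in>V - S. int (dist V E u b))"
  shows "wiener V E < wiener V E'"
proof -
  have "(\<Sum>b\<in>V - S. int (dist V E u b) - int (dist V E p b)) > 0"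
    using assms by (simp add: sum_subtractf)
  moreover have "card S > 0" using SV cg.finV[OF g] finite_subset card_gt_0_iff by blast
  ultimately have "2 * int (card S) * (\<Sum>b\<in>V - S. int (dist V E u b) - int (dist V E p b)) \<ge> 2" 
    by (simp add: mult_pos_pos) (smt (verit) mult_le_cancel_left1 of_nat_0_less_iff)
  then have "int (F E') \<ge> int (F E) + 2" using F_diff by linarith
  then have "F E' \<ge> F E + 2" by linarith
  then show ?thesis unfolding wiener_def F_def[symmetric] by linarith
qed

end

lemma diam_ge:
  assumes "finite V" "a \<in> V" "b \<in> V" shows "dist V E a b \<le> diameter V E"
proof -
  have "finite {dist V E u v | u v. u \<in> V \<and> v \<in> V}"
    using assms(1) by (simp add: finite_image_set2)
  then show ?thesis unfolding diameter_def using assms by (intro Max_ge) auto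
qed

lemma diam_att:
  assumes "finite V" "V \<noteq> {}" shows "\<exists>a\<in>V. \<exists>b\<in>V. dist V E a b = diameter V E"
proof -
  have f: "finite {dist V E u v | u v. u \<in> V \<and> v \<in> V}"
    using assms(1) by (simp add: finite_image_set2)
  have "{dist V E u v | u v. u \<in> V \<and> v \<in> V} \<noteq> {}" using assms(2) by blast
  from Max_in[OF f this] obtain a b where "a \<in> V" "b \<in> V"
    "Max {dist V E u v | u v. u \<in> V \<and> v \<in> V} = dist V E a b" by blast
  then show ?thesis unfolding diameter_def by metis
qed

lemma diam_eq:
  assumes "finite V" "\<And>a b. a \<in> V \<Longrightarrow> b \<in> V \<Longrightarrow> dist V E a b \<le> m"
    "a0 \<in> V" "b0 \<in> V" "dist V E a0 b0 = m"
  shows "diameter V E = m"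
proof -
  have f: "finite {dist V E u v | u v. u \<in> V \<and> v \<in> V}"
    using assms(1) by (simp add: finite_image_set2)
  show ?thesis unfolding diameter_def
    by (rule Max_eqI[OF f]) (use assms in auto)
qed

context swap begin

lemma diam':
  assumes bound: "\<And>a b. a \<in> S \<Longrightarrow> b \<in> V - S \<Longrightarrow> dist V E a s + 1 + dist V E u b \<le> diameter V E"
    and att: "a0 \<in> V - S" "b0 \<in> V - S" "dist V E a0 b0 = diameter V E"
  shows "diameter V E' = diameter V E"
proof (rule diam_eq[OF cg.finV[OF g]])
  show "a0 \<in> V" "b0 \<in> V" using att by auto
  show "dist V E' a0 b0 = diameter V E" using att dR by simp
  fix a b assume ab: "a \<in> V" "b \<in> V"
  have fin: "finite V" using cg.finV[OF g] .
  consider "a \<in> S" "b \<in> S" | "a \<notin> S" "b \<notin> S" | "a \<in> S" "b \<notin> S" | "a \<notin> S" "b \<in> S" by blast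
  then show "dist V E' a b \<le> diameter V E"
  proof cases
    case 1 then show ?thesis using dS diam_ge[OF fin ab] by simp
  next
    case 2 then show ?thesis using dR ab diam_ge[OF fin ab] by simp
  next
    case 3 then show ?thesis using dSR bound ab by simp
  next
    case 4
    have "dist V E' a b = dist V E' b a" using cg.dist_sym[OF g'] ab by blast
    then show ?thesis using 4 dSR[of b a] bound[of b a] ab by simp
  qed
qed

end


locale tr =
  fixes V :: "'a set" and E :: "'a set set"
  assumes tree: "is_tree V E"
begin

lemma g: "cg V E" using tree unfolding is_tree_def cg_def by blast
lemma acyc: "\<not> has_cycle V E" using tree unfolding is_tree_def by blast
lemma fin: "finite V" using cg.finV[OF g] .

lemma dist_adj: "{a,b} \<in> E \<Longrightarrow> dist V E a b = 1"
  using cg.dist_edge[OF g] cg.dist_zero[OF g, of a b] cg.edge_in[OF g, of a b] cg.edge_ne[OF g, of a b]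
  by fastforce

lemma comp_cut:
  assumes e: "{a,b} \<in> E"
  shows "cut V E {v\<in>V. reach V (E - {{a,b}}) a v} a b"
proof -
  define C where "C = {v\<in>V. reach V (E - {{a,b}}) a v}"
  have ab: "a \<in> V" "b \<in> V" "a \<noteq> b" using cg.edge_in[OF g e] cg.edge_ne[OF g e] by auto
  have aC: "a \<in> C" unfolding C_def using ab(1) reach_refl[of a V "E - {{a,b}}"] by simp
  have bC: "b \<notin> C"
  proof
    assume "b \<in> C"
    then have "reach V (E - {{a,b}}) a b" unfolding C_def by blast
    then show False using edge_cycle[OF e ab(3)] acyc unfolding reach_def by blast
  qed
  have crs: "v = a \<and> w = b" if vw: "{v,w} \<in> E" "v \<in> C" "w \<notin> C" for v w
  proof (cases "{v,w} = {a,b}")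
    case True then show ?thesis using vw aC bC by (auto simp: doubleton_eq_iff)
  next
    case False
    have wV: "v \<in> V" "w \<in> V" using cg.edge_in[OF g vw(1)] by auto
    have e2: "{v,w} \<in> E - {{a,b}}" using vw(1) False by blast
    have r1: "reach V (E - {{a,b}}) v w" using reach_edge[OF e2 wV] .
    have r0: "reach V (E - {{a,b}}) a v" using vw(2) unfolding C_def by blast
    have "reach V (E - {{a,b}}) a w" using reach_trans[OF r0 r1] .
    then have "w \<in> C" using wV unfolding C_def by blast
    then show ?thesis using vw(3) by blast
  qed
  have "C \<subseteq> V" unfolding C_def by blast
  then show ?thesis unfolding cut_def C_def[symmetric] using aC bC ab(2) e crs by blast
qed

lemma delta:
  assumes ct: "cut V E S s p" and e: "{p,u} \<in> E" and uS: "u \<notin> S"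
  defines "C \<equiv> {v\<in>V. reach V (E - {{u,p}}) u v}"
  shows "C \<subseteq> V - S" "p \<notin> C" "u \<in> C" "cut V E C u p"
    "(\<Sum>b\<in>V - S. int (dist V E u b) - int (dist V E p b)) = int (card (V - S)) - 2 * int (card C)"
proof -
  have e': "{u,p} \<in> E" using e by (simp add: insert_commute)
  show cC: "cut V E C u p" unfolding C_def by (rule comp_cut[OF e'])
  have CC: "C \<subseteq> V" "u \<in> C" "p \<in> V" "p \<notin> C"
    and crC: "\<And>v w. {v,w} \<in> E \<Longrightarrow> v \<in> C \<Longrightarrow> w \<notin> C \<Longrightarrow> v = u \<and> w = p"
    using cC unfolding cut_def by blast+
  then show "p \<notin> C" "u \<in> C" by auto
  have SS: "S \<subseteq> V" "s \<in> S" "p \<notin> S" "{s,p} \<in> E"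
    and crS: "\<And>v w. {v,w} \<in> E \<Longrightarrow> v \<in> S \<Longrightarrow> w \<notin> S \<Longrightarrow> v = s \<and> w = p"
    using ct unfolding cut_def by blast+
  have uV: "u \<in> V" using cg.edge_in[OF g e] by blast
  have sC: "s \<notin> C"
  proof
    assume "s \<in> C"
    then have "s = u" using crC[OF SS(4)] CC by blast
    then show False using SS uS by simp
  qed
  show sub: "C \<subseteq> V - S"
  proof
    fix a assume aC: "a \<in> C"
    have aV: "a \<in> V" using aC CC by blast
    show "a \<in> V - S"
    proof (rule ccontr)
      assume "a \<notin> V - S"
      then have aS: "a \<in> S" using aV by blast
      have 1: "dist V E a u = dist V E a s + 1 + dist V E p u"
        using cg.cut_dist[OF g ct aS] uV uS by blast
      have 2: "dist V E p u = 1" using dist_adj[OF e] .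
      have 3: "dist V E a p = dist V E a u + 1 + dist V E p p"
        using cg.cut_dist[OF g cC aC] CC by blast
      have 4: "dist V E a p = dist V E a s + 1 + dist V E p p"
        using cg.cut_dist[OF g ct aS] CC SS by blast
      show False using 1 2 3 4 by simp
    qed
  qed
  define \<delta> where "\<delta> b = int (dist V E u b) - int (dist V E p b)" for b
  have dv: "\<delta> b = (if b \<in> C then -1 else 1)" if b: "b \<in> V" for b
  proof (cases "b \<in> C")
    case True
    have "dist V E b p = dist V E b u + 1 + dist V E p p" using cg.cut_dist[OF g cC True] CC by blast
    moreover have "dist V E b p = dist V E p b" "dist V E b u = dist V E u b"
      using cg.dist_sym[OF g] b CC uV by blast+
    ultimately show ?thesis using True cg.dist_self[OF g] CC by (simp add: \<delta>_def)
  next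
    case False
    have "dist V E u b = dist V E u u + 1 + dist V E p b" using cg.cut_dist[OF g cC CC(2)] b False by blast
    then show ?thesis using False cg.dist_self[OF g] uV by (simp add: \<delta>_def)
  qed
  have finR: "finite (V - S)" using fin by simp
  have "(\<Sum>b\<in>V - S. \<delta> b) = (\<Sum>b\<in>V - S. (if b \<in> C then -1 else 1 :: int))"
    using dv by (intro sum.cong) auto
  also have "\<dots> = - int (card C) + int (card (V - S - C))"
  proof -
    have e1: "(V - S) \<inter> {b. b \<in> C} = C" "(V - S) \<inter> - {b. b \<in> C} = V - S - C"
      "(V - S) \<inter> C = C" "(V - S) \<inter> - C = V - S - C" using sub by blast+
    show ?thesis using finR by (simp add: sum.If_cases e1)
  qed
  also have "card (V - S - C) = card (V - S) - card C" using sub finR card_Diff_subset finite_subset by blast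
  also have "int (card (V - S) - card C) = int (card (V - S)) - int (card C)"
    using card_mono[OF finR sub] by simp
  finally show "(\<Sum>b\<in>V - S. int (dist V E u b) - int (dist V E p b)) = int (card (V - S)) - 2 * int (card C)"
    unfolding \<delta>_def by simp
qed

lemma disj:
  assumes c1: "cut V E C1 u1 p" and c2: "cut V E C2 u2 p" and ne: "u1 \<noteq> u2"
  shows "C1 \<inter> C2 = {}"
proof (rule ccontr)
  assume "C1 \<inter> C2 \<noteq> {}"
  then obtain b where b: "b \<in> C1" "b \<in> C2" by blast
  have C1: "C1 \<subseteq> V" "u1 \<in> C1" "p \<in> V" "p \<notin> C1" "{u1,p} \<in> E"
    using c1 unfolding cut_def by blast+
  have C2: "C2 \<subseteq> V" "u2 \<in> C2" "p \<notin> C2" "{u2,p} \<in> E"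
    and cr2: "\<And>v w. {v,w} \<in> E \<Longrightarrow> v \<in> C2 \<Longrightarrow> w \<notin> C2 \<Longrightarrow> v = u2 \<and> w = p"
    using c2 unfolding cut_def by blast+
  have u1C2: "u1 \<notin> C2"
  proof
    assume "u1 \<in> C2"
    then have "u1 = u2" using cr2[OF C1(5)] C2 by blast
    then show False using ne by simp
  qed
  have u1V: "u1 \<in> V" using C1 by blast
  have 1: "dist V E b u1 = dist V E b u2 + 1 + dist V E p u1"
    using cg.cut_dist[OF g c2 b(2)] u1V u1C2 by blast
  have 2: "dist V E p u1 = 1" using dist_adj C1(5) by (simp add: insert_commute)
  have 3: "dist V E b p = dist V E b u1 + 1 + dist V E p p" using cg.cut_dist[OF g c1 b(1)] C1 by blast
  have 4: "dist V E b p = dist V E b u2 + 1 + dist V E p p" using cg.cut_dist[OF g c2 b(2)] C1 C2 by blast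
  show False using 1 2 3 4 by simp
qed

lemma gain:
  assumes ct: "cut V E S s p" and e1: "{p,u1} \<in> E" and e2: "{p,u2} \<in> E"
    and n1: "u1 \<notin> S" and n2: "u2 \<notin> S" and ne: "u1 \<noteq> u2"
  shows "\<exists>u\<in>{u1,u2}. (\<Sum>b\<in>V - S. int (dist V E p b)) < (\<Sum>b\<in>V - S. int (dist V E u b))"
proof -
  define C1 where "C1 = {v\<in>V. reach V (E - {{u1,p}}) u1 v}"
  define C2 where "C2 = {v\<in>V. reach V (E - {{u2,p}}) u2 v}"
  note d1 = delta[OF ct e1 n1, folded C1_def]
  note d2 = delta[OF ct e2 n2, folded C2_def]
  have dj: "C1 \<inter> C2 = {}" using disj[OF d1(4) d2(4) ne] .
  have pR: "p \<in> V - S" using ct unfolding cut_def by blast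
  have "C1 \<union> C2 \<subseteq> V - S - {p}" using d1(1,2) d2(1,2) by blast
  then have "card (C1 \<union> C2) \<le> card (V - S - {p})" using fin by (intro card_mono) auto
  also have "\<dots> = card (V - S) - 1" using pR fin by simp
  finally have "card C1 + card C2 \<le> card (V - S) - 1"
    using card_Un_disjoint[of C1 C2] dj fin d1(1) d2(1) finite_subset by (metis finite_Diff)
  moreover have "card (V - S) \<ge> 1" using pR fin by (metis card_0_eq finite_Diff empty_iff less_one not_le)
  ultimately have "int (card (V - S)) - 2 * int (card C1) + (int (card (V - S)) - 2 * int (card C2)) > 0"
    by linarith
  then have "(\<Sum>b\<in>V - S. int (dist V E u1 b) - int (dist V E p b)) > 0 \<or>
             (\<Sum>b\<in>V - S. int (dist V E u2 b) - int (dist V E p b)) > 0"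
    using d1(5) d2(5) by linarith
  then show ?thesis by (auto simp: sum_subtractf)
qed

end


context tr begin

lemma iter:
  assumes xV: "x \<in> V" and ecc: "\<And>b. b \<in> V \<Longrightarrow> dist V E x b < diameter V E"
    and mx: "\<And>E'. is_tree V E' \<Longrightarrow> diameter V E' = diameter V E \<Longrightarrow> wiener V E' \<le> wiener V E"
  shows "cut V E S s p \<Longrightarrow> x \<in> S \<Longrightarrow> \<forall>a\<in>S. \<forall>a'\<in>S. dist V E a a' \<le> dist V E x s \<Longrightarrow> False"
proof (induction "card (V - S)" arbitrary: S s p rule: less_induct)
  case less
  note ct = less.prems(1)
  have SS: "S \<subseteq> V" "s \<in> S" "p \<in> V" "p \<notin> S" "{s,p} \<in> E"
    and cr: "\<And>v w. {v,w} \<in> E \<Longrightarrow> v \<in> S \<Longrightarrow> w \<notin> S \<Longrightarrow> v = s \<and> w = p"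
    using ct unfolding cut_def by blast+
  have xS: "x \<in> S" using less.prems(2) .
  have inv: "\<And>a a'. a \<in> S \<Longrightarrow> a' \<in> S \<Longrightarrow> dist V E a a' \<le> dist V E x s" using less.prems(3) by blast
  have sV: "s \<in> V" using SS by blast
  have dSR: "\<And>a b. a \<in> S \<Longrightarrow> b \<in> V \<Longrightarrow> b \<notin> S \<Longrightarrow> dist V E a b = dist V E a s + 1 + dist V E p b"
    using cg.cut_dist[OF g ct] by blast
  have pp: "dist V E p p = 0" using cg.dist_self[OF g SS(3)] .
  have xp: "dist V E x p = dist V E x s + 1" using dSR[OF xS SS(3,4)] pp by simp
  have xpd: "dist V E x p < diameter V E" using ecc SS(3) by blast
  have crossd: "dist V E a b < diameter V E" if "a \<in> S" "b \<in> V" "b \<notin> S" for a b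
  proof -
    have "dist V E a b = dist V E a s + 1 + dist V E p b" using dSR that by blast
    also have "\<dots> \<le> dist V E x s + 1 + dist V E p b" using inv[OF that(1) SS(2)] by simp
    also have "\<dots> = dist V E x b" using dSR[OF xS that(2,3)] by simp
    finally show ?thesis using ecc that(2) by (meson le_less_trans)
  qed
  have inS: "dist V E a b < diameter V E" if "a \<in> S" "b \<in> S" for a b
    using inv[OF that] xp xpd by simp
  define N where "N = {w. {p,w} \<in> E \<and> w \<noteq> s}"
  have NR: "w \<in> V \<and> w \<notin> S" if "w \<in> N" for w
  proof -
    have e: "{p,w} \<in> E" "w \<noteq> s" using that N_def by auto
    have "w \<in> V" using cg.edge_in[OF g e(1)] by blast
    moreover have "w \<notin> S"
    proof
      assume "w \<in> S"
      moreover have "{w,p} \<in> E" using e by (simp add: insert_commute)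
      ultimately show False using cr SS e(2) by blast
    qed
    ultimately show ?thesis by blast
  qed
  have Vne: "V \<noteq> {}" using xV by blast
  obtain a0 b0 where ab0: "a0 \<in> V" "b0 \<in> V" "dist V E a0 b0 = diameter V E"
    using diam_att[OF fin Vne] by blast
  consider "N = {}" | p' where "N = {p'}" | u1 u2 where "u1 \<in> N" "u2 \<in> N" "u1 \<noteq> u2"
    by (metis empty_iff insertI1 subsetI subset_singletonD)
  then show False
  proof cases
    case 1
    have R: "b = p" if b: "b \<in> V" "b \<notin> S" for b
    proof -
      have "reach V E p b" using g SS(3) b(1) unfolding cg_def connected_iff by blast
      then obtain xs where xs: "ch E xs" "xs \<noteq> []" "set xs \<subseteq> V" "hd xs = p" "last xs = b"
        unfolding reach_def by blast
      have "set xs \<subseteq> insert p S"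
      proof (rule closure[OF xs(1,2)])
        show "hd xs \<in> insert p S" using xs by simp
        fix v w assume e: "{v,w} \<in> E" "v \<in> insert p S"
        show "w \<in> insert p S"
        proof (cases "v = p")
          case True
          then have "w = s \<or> w \<in> N" using e N_def by blast
          then show ?thesis using 1 SS by blast
        next
          case False
          then have "v \<in> S" using e by blast
          then show ?thesis using cr e by blast
        qed
      qed
      then have "b \<in> insert p S" using xs(2,5) last_in_set by blast
      then show ?thesis using b by blast
    qed
    have "dist V E a0 b0 < diameter V E"
    proof (cases "a0 \<in> S")
      case True
      show ?thesis
      proof (cases "b0 \<in> S")
        case True then show ?thesis using inS \<open>a0 \<in> S\<close> by blast
      next
        case False then show ?thesis using crossd True ab0 by blast
      qed
    next
      case False
      then have a0p: "a0 = p" using R ab0 by blast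
      show ?thesis
      proof (cases "b0 \<in> S")
        case True
        have "dist V E a0 b0 = dist V E b0 a0" using cg.dist_sym[OF g] ab0 by blast
        then show ?thesis using crossd True ab0 False by auto
      next
        case False then have "b0 = p" using R ab0 by blast
        then show ?thesis using a0p pp xpd by simp
      qed
    qed
    then show False using ab0 by simp
  next
    case 2
    have pN: "{p,p'} \<in> E" "p' \<noteq> s" using 2 N_def by auto
    have p'V: "p' \<in> V" "p' \<notin> S" using NR 2 by auto
    have pp': "p \<noteq> p'" using cg.edge_ne[OF g pN(1)] .
    have ct': "cut V E (insert p S) p p'"
    proof -
      have "v = p \<and> w = p'" if e: "{v,w} \<in> E" "v \<in> insert p S" "w \<notin> insert p S" for v w
      proof (cases "v = p")
        case True
        then have "w \<in> N" using e SS(2) N_def by auto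
        then show ?thesis using 2 True by blast
      next
        case False
        then have "v \<in> S" using e by blast
        then have "w = p" using cr e by blast
        then show ?thesis using e by blast
      qed
      then show ?thesis unfolding cut_def using SS p'V pp' pN by blast
    qed
    have lt: "card (V - insert p S) < card (V - S)"
    proof -
      have "V - insert p S = (V - S) - {p}" by blast
      moreover have "card (V - S) > 0" using fin SS(3,4) by (auto simp: card_gt_0_iff)
      ultimately show ?thesis using fin SS(3,4) by simp
    qed
    have inv': "\<forall>a\<in>insert p S. \<forall>a'\<in>insert p S. dist V E a a' \<le> dist V E x p"
    proof (intro ballI)
      fix a a' assume a: "a \<in> insert p S" "a' \<in> insert p S"
      have pa: "dist V E p c \<le> dist V E x p" if c: "c \<in> S" for c
      proof -
        have "dist V E p c = dist V E c p" using cg.dist_sym[OF g] c SS by blast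
        also have "\<dots> = dist V E c s + 1" using dSR[OF c SS(3,4)] pp by simp
        also have "\<dots> \<le> dist V E x s + 1" using inv[OF c SS(2)] by simp
        finally show ?thesis using xp by simp
      qed
      show "dist V E a a' \<le> dist V E x p"
      proof (cases "a = p")
        case True
        then show ?thesis
        proof (cases "a' = p")
          case True then show ?thesis using \<open>a = p\<close> pp by simp
        next
          case False then show ?thesis using pa a \<open>a = p\<close> by blast
        qed
      next
        case False
        then have aS: "a \<in> S" using a by blast
        show ?thesis
        proof (cases "a' = p")
          case True
          have "dist V E a a' = dist V E a' a" using cg.dist_sym[OF g] aS a SS True by auto
          then show ?thesis using pa aS True by simp
        next
          case False then have "a' \<in> S" using a by blast
          then show ?thesis using inv aS xp by fastforce
        qed
      qed
    qed
    show False using less.hyps[OF lt ct'] xS inv' by blast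
  next
    case 3
    have e1: "{p,u1} \<in> E" and e2: "{p,u2} \<in> E" using 3 N_def by auto
    obtain u where u: "u \<in> {u1,u2}"
      "(\<Sum>b\<in>V - S. int (dist V E p b)) < (\<Sum>b\<in>V - S. int (dist V E u b))"
      using gain[OF ct e1 e2] NR 3 by blast
    have uN: "u \<in> N" using u 3 by blast
    have eu: "{p,u} \<in> E" using uN N_def by blast
    have uV: "u \<in> V" "u \<notin> S" using NR uN by auto
    have up: "u \<noteq> p" using cg.edge_ne[OF g eu] by simp
    have sw: "swap V E S s p u" unfolding swap_def using tree ct uV up by blast
    define E' where "E' = (E - {{s,p}}) \<union> {{s,u}}"
    have t': "is_tree V E'" using swap.tree'[OF sw] unfolding E'_def .
    have wg: "wiener V E < wiener V E'" using swap.wiener_gain[OF sw u(2)] unfolding E'_def .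
    have bound: "dist V E a s + 1 + dist V E u b \<le> diameter V E" if ab: "a \<in> S" "b \<in> V - S" for a b
    proof -
      have "dist V E b u \<le> dist V E b p + 1" using cg.dist_lip[OF g eu] ab by blast
      moreover have "dist V E b u = dist V E u b" "dist V E b p = dist V E p b"
        using cg.dist_sym[OF g] ab uV SS by blast+
      moreover have "dist V E a s \<le> dist V E x s" using inv[OF ab(1) SS(2)] .
      moreover have "dist V E x b = dist V E x s + 1 + dist V E p b" using dSR[OF xS] ab by blast
      moreover have "dist V E x b < diameter V E" using ecc ab by blast
      ultimately show ?thesis by linarith
    qed
    have att: "a0 \<in> V - S" "b0 \<in> V - S"
    proof -
      have "a0 \<notin> S"
      proof
        assume a0S: "a0 \<in> S"
        show False
        proof (cases "b0 \<in> S")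
          case True then show False using inS a0S ab0 by fastforce
        next
          case False then show False using crossd a0S ab0 by fastforce
        qed
      qed
      moreover have "b0 \<notin> S"
      proof
        assume b0S: "b0 \<in> S"
        have "dist V E a0 b0 = dist V E b0 a0" using cg.dist_sym[OF g] ab0 by blast
        then show False using crossd[OF b0S ab0(1)] \<open>a0 \<notin> S\<close> ab0 by simp
      qed
      ultimately show "a0 \<in> V - S" "b0 \<in> V - S" using ab0 by auto
    qed
    have "diameter V E' = diameter V E"
      using swap.diam'[OF sw bound att ab0(3)] unfolding E'_def .
    then have "wiener V E' \<le> wiener V E" using mx t' by blast
    then show False using wg by simp
  qed
qed

end


lemma iso_walk:
  assumes "inj_on f V" "walk V E xs"
  shows "walk (f ` V) ((`) f ` E) (map f xs)"
proof -
  have "ch E xs" "xs \<noteq> []" "set xs \<subseteq> V" using assms(2) unfolding walk_iff by auto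
  moreover have "ch ((`) f ` E) (map f xs)"
    unfolding successively_map
    by (rule successively_mono[OF \<open>ch E xs\<close>]) (metis image_empty image_eqI image_insert)
  ultimately show ?thesis unfolding walk_iff by auto
qed

lemma iso_cycle:
  assumes "inj_on f V" "has_cycle V E"
  shows "has_cycle (f ` V) ((`) f ` E)"
proof -
  obtain xs where xs: "walk V E xs" "distinct xs" "length xs \<ge> 3" "{last xs, hd xs} \<in> E"
    using assms(2) unfolding has_cycle_def by blast
  have ne: "xs \<noteq> []" "set xs \<subseteq> V" using xs(1) unfolding walk_iff by auto
  have "walk (f ` V) ((`) f ` E) (map f xs)" using iso_walk[OF assms(1) xs(1)] .
  moreover have "distinct (map f xs)" using xs(2) ne(2) assms(1)
    by (simp add: distinct_map inj_on_subset)
  moreover have "length (map f xs) \<ge> 3" using xs(3) by simp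
  moreover have "{last (map f xs), hd (map f xs)} \<in> (`) f ` E"
    using xs(4) ne by (simp add: last_map hd_map) (metis image_empty image_eqI image_insert)
  ultimately show ?thesis unfolding has_cycle_def by blast
qed

lemma iso_conn:
  assumes "inj_on f V" "connected_graph V E"
  shows "connected_graph (f ` V) ((`) f ` E)"
proof -
  have "\<exists>ys. walk (f ` V) ((`) f ` E) ys \<and> hd ys = a' \<and> last ys = b'" if h: "a' \<in> f ` V" "b' \<in> f ` V" for a' b'
  proof -
    obtain a b where ab: "a \<in> V" "b \<in> V" "a' = f a" "b' = f b" using h by blast
    obtain xs where xs: "walk V E xs" "hd xs = a" "last xs = b" using assms(2) ab unfolding connected_graph_def by blast
    have "xs \<noteq> []" using xs unfolding walk_iff by auto
    then show ?thesis using iso_walk[OF assms(1) xs(1)] xs ab by (auto simp: hd_map last_map)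
  qed
  then show ?thesis using assms(2) unfolding connected_graph_def by blast
qed

lemma iso_simple:
  assumes "inj_on f V" "simple_graph V E"
  shows "simple_graph (f ` V) ((`) f ` E)"
proof -
  have "\<exists>u v. e' = {u, v} \<and> u \<noteq> v \<and> u \<in> f ` V \<and> v \<in> f ` V" if h: "e' \<in> (`) f ` E" for e'
  proof -
    obtain e where e: "e \<in> E" "e' = f ` e" using h by blast
    obtain u v where uv: "e = {u,v}" "u \<noteq> v" "u \<in> V" "v \<in> V" using assms(2) e unfolding simple_graph_def by blast
    have "f u \<noteq> f v" using assms(1) uv by (meson inj_on_def)
    then show ?thesis using uv e by (intro exI[of _ "f u"] exI[of _ "f v"]) auto
  qed
  moreover have "finite (f ` V)" using assms(2) unfolding simple_graph_def by simp
  ultimately show ?thesis unfolding simple_graph_def by blast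
qed

lemma iso_dist_le:
  assumes "inj_on f V" "cg V E" "a \<in> V" "b \<in> V"
  shows "dist (f ` V) ((`) f ` E) (f a) (f b) \<le> dist V E a b"
proof -
  have g2: "cg (f ` V) ((`) f ` E)" using assms(1,2) iso_simple iso_conn unfolding cg_def by blast
  obtain xs where xs: "walk V E xs" "hd xs = a" "last xs = b" "length xs = Suc (dist V E a b)"
    using cg.dist_walk[OF assms(2,3,4)] by blast
  have "xs \<noteq> []" using xs unfolding walk_iff by auto
  then show ?thesis using cg.dist_le[OF g2 iso_walk[OF assms(1) xs(1)]] xs by (simp add: hd_map last_map)
qed

lemma iso_back:
  assumes "inj_on f V" "simple_graph V E"
  shows "inv_into V f ` f ` V = V" "(`) (inv_into V f) ` (`) f ` E = E" "inj_on (inv_into V f) (f ` V)"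
proof -
  show "inv_into V f ` f ` V = V" by (rule inv_into_image_cancel[OF assms(1)]) simp
  have eV: "e \<subseteq> V" if h: "e \<in> E" for e
  proof -
    obtain u v where "e = {u,v}" "u \<in> V" "v \<in> V" using assms(2) h unfolding simple_graph_def by blast
    then show ?thesis by simp
  qed
  have "(`) (inv_into V f) ` (`) f ` E = (\<lambda>e. inv_into V f ` f ` e) ` E" by (rule image_image)
  also have "\<dots> = (\<lambda>e. e) ` E"
    by (rule image_cong[OF refl]) (rule inv_into_image_cancel[OF assms(1) eV])
  finally show "(`) (inv_into V f) ` (`) f ` E = E" by simp
  show "inj_on (inv_into V f) (f ` V)" by (rule inj_on_inv_into) (rule subset_refl)
qed

lemma iso_all:
  assumes inj: "inj_on f V" and t: "is_tree V E"
  shows "is_tree (f ` V) ((`) f ` E)" "card (f ` V) = card V"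
    "diameter (f ` V) ((`) f ` E) = diameter V E" "wiener (f ` V) ((`) f ` E) = wiener V E"
proof -
  have g: "cg V E" using t unfolding is_tree_def cg_def by blast
  have sg: "simple_graph V E" using t unfolding is_tree_def by blast
  have sg2: "simple_graph (f ` V) ((`) f ` E)" using iso_simple[OF inj sg] .
  have cn2: "connected_graph (f ` V) ((`) f ` E)" using iso_conn[OF inj] t unfolding is_tree_def by blast
  have g2: "cg (f ` V) ((`) f ` E)" using sg2 cn2 unfolding cg_def by blast
  note bk = iso_back[OF inj sg]
  have "\<not> has_cycle (f ` V) ((`) f ` E)"
  proof
    assume "has_cycle (f ` V) ((`) f ` E)"
    then have "has_cycle (inv_into V f ` f ` V) ((`) (inv_into V f) ` (`) f ` E)"
      by (rule iso_cycle[OF bk(3)])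
    then have "has_cycle V E" unfolding bk(1,2) .
    then show False using t unfolding is_tree_def by blast
  qed
  then show "is_tree (f ` V) ((`) f ` E)" using sg2 cn2 unfolding is_tree_def by blast
  show "card (f ` V) = card V" using inj by (simp add: card_image)
  have de: "dist (f ` V) ((`) f ` E) (f a) (f b) = dist V E a b" if "a \<in> V" "b \<in> V" for a b
  proof -
    have 1: "dist (f ` V) ((`) f ` E) (f a) (f b) \<le> dist V E a b" using iso_dist_le[OF inj g that] .
    have "dist (inv_into V f ` f ` V) ((`) (inv_into V f) ` (`) f ` E) (inv_into V f (f a)) (inv_into V f (f b))
       \<le> dist (f ` V) ((`) f ` E) (f a) (f b)"
      using iso_dist_le[OF bk(3) g2] that by blast
    then have 2: "dist V E a b \<le> dist (f ` V) ((`) f ` E) (f a) (f b)" using bk(1,2) that inj by simp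
    show ?thesis using 1 2 by simp
  qed
  have "{dist (f ` V) ((`) f ` E) u v | u v. u \<in> f ` V \<and> v \<in> f ` V} = {dist V E u v | u v. u \<in> V \<and> v \<in> V}"
  proof (intro equalityI subsetI)
    fix z assume "z \<in> {dist (f ` V) ((`) f ` E) u v | u v. u \<in> f ` V \<and> v \<in> f ` V}"
    then obtain a b where ab: "a \<in> V" "b \<in> V" "z = dist (f ` V) ((`) f ` E) (f a) (f b)" by blast
    then have "z = dist V E a b" using de by simp
    then show "z \<in> {dist V E u v | u v. u \<in> V \<and> v \<in> V}" using ab by blast
  next
    fix z assume "z \<in> {dist V E u v | u v. u \<in> V \<and> v \<in> V}"
    then obtain a b where ab: "a \<in> V" "b \<in> V" "z = dist V E a b" by blast
    then have "z = dist (f ` V) ((`) f ` E) (f a) (f b)" using de by simp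
    then show "z \<in> {dist (f ` V) ((`) f ` E) u v | u v. u \<in> f ` V \<and> v \<in> f ` V}" using ab by blast
  qed
  then show "diameter (f ` V) ((`) f ` E) = diameter V E" unfolding diameter_def by simp
  have "(\<Sum>u\<in>f ` V. \<Sum>v\<in>f ` V. dist (f ` V) ((`) f ` E) u v) = (\<Sum>u\<in>V. \<Sum>v\<in>V. dist (f ` V) ((`) f ` E) (f u) (f v))"
    using inj by (simp add: sum.reindex)
  also have "\<dots> = (\<Sum>u\<in>V. \<Sum>v\<in>V. dist V E u v)"
    by (intro sum.cong refl) (simp add: de)
  finally show "wiener (f ` V) ((`) f ` E) = wiener V E" unfolding wiener_def by simp
qed



theorem mainTheorem3:
  fixes V :: "'a set" and E :: "'a set set" and n d :: nat and x :: 'a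
  assumes "is_tree V E" and "card V = n" and "diameter V E = d"
    and "max_wiener_tree V E"
    and "leaf V E x"
  shows "ecc V E x = d"
proof -
  have t: "is_tree V E" using assms(1) .
  interpret tr V E using t by (simp add: tr_def)
  have sg: "simple_graph V E" using t unfolding is_tree_def by blast
  have xV: "x \<in> V" and deg: "card {e \<in> E. x \<in> e} = 1"
    using assms(5) unfolding leaf_def degree_def by auto
  obtain e where e1: "{e' \<in> E. x \<in> e'} = {e}" using card_1_singletonE[OF deg] by blast
  have eE: "e \<in> E" "x \<in> e" using e1 by auto
  have "\<exists>a b. e = {a,b} \<and> a \<noteq> b \<and> a \<in> V \<and> b \<in> V" using sg eE(1) unfolding simple_graph_def by (elim conjE bspec)
  then obtain a b where ab: "e = {a,b}" "a \<noteq> b" "a \<in> V" "b \<in> V" by blast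
  define y where "y = (if a = x then b else a)"
  have exy: "e = {x,y}" "x \<noteq> y" "y \<in> V" using ab eE(2) unfolding y_def by auto
  have cr0: "v = x \<and> w = y" if h: "{v,w} \<in> E" "v \<in> {x}" "w \<notin> {x}" for v w
  proof -
    have vx: "v = x" "w \<noteq> x" using h(2,3) by auto
    have "{v,w} \<in> {e' \<in> E. x \<in> e'}" using h(1) vx by simp
    then have "{v,w} \<in> {e}" unfolding e1 .
    then have "{v,w} = e" by simp
    then have "{x,w} = {x,y}" using exy(1) vx by simp
    then have "w = y" using vx(2) by (simp add: doubleton_eq_iff)
    then show ?thesis using vx by simp
  qed
  have c1: "{x} \<subseteq> V" "x \<in> {x}" "y \<in> V" "y \<notin> {x}" "{x,y} \<in> E"
    using xV exy eE by auto
  have ct: "cut V E {x} x y"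
    unfolding cut_def using c1 cr0 by blast
  have mx: "wiener V E' \<le> wiener V E" if h: "is_tree V E'" "diameter V E' = diameter V E" for E'
  proof -
    obtain f :: "'a \<Rightarrow> nat" and m where f: "f ` V = {i. i < m}" "inj_on f V"
      using finite_imp_inj_to_nat_seg[OF fin] by blast
    note iso = iso_all[OF f(2) h(1)]
    have "\<forall>(V' :: nat set) E'. is_tree V' E' \<and> card V' = card V \<and> diameter V' E' = diameter V E
        \<longrightarrow> wiener V' E' \<le> wiener V E" using assms(4) unfolding max_wiener_tree_def by blast
    then have "wiener (f ` V) ((`) f ` E') \<le> wiener V E"
      using iso(1,2,3) h(2) by simp
    then show ?thesis using iso by simp
  qed
  have finD: "finite {dist V E x u | u. u \<in> V}" using fin by simp
  have le: "dist V E x b \<le> ecc V E x" if "b \<in> V" for b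
    unfolding ecc_def by (rule Max_ge[OF finD]) (use that in blast)
  have "{dist V E x u | u. u \<in> V} \<noteq> {}" using xV by blast
  from Max_in[OF finD this] obtain u where u: "u \<in> V" "ecc V E x = dist V E x u"
    unfolding ecc_def by blast
  have eccle: "ecc V E x \<le> diameter V E" using u diam_ge[OF fin xV u(1)] by simp
  show ?thesis
  proof (rule ccontr)
    assume "ecc V E x \<noteq> d"
    then have "ecc V E x < diameter V E" using eccle assms(3) by simp
    then have ecc: "dist V E x b < diameter V E" if "b \<in> V" for b using le[OF that] by simp
    have "dist V E x x \<le> dist V E x x" by simp
    then show False using iter[OF xV ecc mx ct] by blast
  qed
qed

end
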